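(* There exist constants $C_1$ and $C_2$, depending only on $p$, $V$ and $\Omega$, such that $$\tfrac12\mathcal E_{\mathcal D}(\mathbf u)+C_1\le\int_\Omega\Gamma(\pi_{\mathcal D}\mathbf u)\,dx\le2\,\mathcal E_{\mathcal D}(\mathbf u)+C_2\qquad\text{for all }\mathbf u\in W^{\rm en}_{\mathcal D}.$$ In particular, $\mathcal E_{\mathcal D}$ is bounded from below uniformly with respect to the discretization $\mathcal D$.
   Context: $\Omega\subset\mathbb R^d$ ($d\in\{2,3\}$) connected bounded open polyhedral. $p\in L^1_{loc}(\mathbb R_+)$ absolutely continuous and increasing on $(0,\infty)$, $p(u)\to+\infty$ as $u\to\infty$; if $p(0)=\lim_{u\downarrow0}p(u)$ is finite, $p(u)=2p(0)-p(-u)$ for $u\le0$; $I_p=(0,\infty)$ if $p(0)=-\infty$, else $\mathbb R$; $\Gamma(u)=\int_1^u(p(a)-p(1))da$ on $\bar I_p$, $\Gamma(u)=+\infty$ if $p(0)=-\infty$ and $u<0$. $V:\Omega\to\mathbb R$ Lipschitz. Discretization $\mathcal D$: cells $\mathcal M$ (disjoint open polyhedra covering $\bar\Omega$, star-shaped w.r.t. $x_K$), vertices $\mathcal V$ at positions $x_s\in\bar\Omega$, $\mathcal V_K$ vertices of $K$, $\mathcal M_s$ cells containing $s$. Mass lumping: $\alpha_{K,s}\ge0$, $\sum_{s\in\mathcal V_K}\alpha_{K,s}\le1$, $m_{K,s}=\alpha_{K,s}|K|$, $m_s=\sum_{K\in\mathcal M_s}m_{K,s}$, $m_K=|K|-\sum_sm_{K,s}$;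 disjoint open $\omega_K,\omega_{K,s}\subset K$ with closures covering $\bar K$, $|\omega_K|=m_K$, $|\omega_{K,s}|=m_{K,s}$; $\omega_s=\bigcup_{K\in\mathcal M_s}\omega_{K,s}$. $W_{\mathcal D}=\{(v_K,v_s)_{K\in\mathcal M,s\in\mathcal V}\}$, $\pi_{\mathcal D}\mathbf v=\sum_Kv_K\mathbf 1_{\omega_K}+\sum_sv_s\mathbf 1_{\omega_s}$, $\mathbf V=(V(x_K),V(x_s))$, $\mathcal E_{\mathcal D}(\mathbf v)=\int_\Omega(\Gamma(\pi_{\mathcal D}\mathbf v)+\pi_{\mathcal D}\mathbf v\,\pi_{\mathcal D}\mathbf V)dx$, $W^{\rm en}_{\mathcal D}=\{\mathbf v:\mathcal E_{\mathcal D}(\mathbf v)<\infty\}$. *)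

theory Defs
  imports "HOL-Analysis.Analysis"
begin

definition abs_continuous_on :: "real set \<Rightarrow> (real \<Rightarrow> real) \<Rightarrow> bool" where
  "abs_continuous_on S f \<longleftrightarrow>
     (\<forall>\<epsilon>>0. \<exists>\<delta>>0. \<forall>(n::nat) (a::nat \<Rightarrow> real) (b::nat \<Rightarrow> real).
        (\<forall>i<n. a i \<le> b i \<and> {a i..b i} \<subseteq> S) \<and>
        (\<forall>i<n. \<forall>j<n. i \<noteq> j \<longrightarrow> b i \<le> a j \<or> b j \<le> a i) \<and>
        (\<Sum>i<n. b i - a i) < \<delta>
        \<longrightarrow> (\<Sum>i<n. \<bar>f (b i) - f (a i)\<bar>) < \<epsilon>)"

definition open_polyhedral :: "('a::euclidean_space) set \<Rightarrow> bool" where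
  "open_polyhedral K \<longleftrightarrow> open K \<and> bounded K \<and> interior (closure K) = K \<and>
     (\<exists>F. finite F \<and> (\<forall>P\<in>F. polytope P) \<and> closure K = \<Union>F)"

text \<open>The functional Gamma; p0 = lim_{u -> 0+} p u (possibly -infinity).\<close>
definition Gamma_fun :: "(real \<Rightarrow> real) \<Rightarrow> ereal \<Rightarrow> real \<Rightarrow> ereal" where
  "Gamma_fun p p0 u = (if p0 = -\<infinity> \<and> u < 0 then \<infinity>
                       else ereal (LBINT a=1..u. p a - p 1))"

text \<open>Cells are indexed by the finite set Mc of naturals,
  vertices by the finite set Vs of naturals.
  cell K: open cell, xK K: its centre; xs s: vertex position; VK K: vertices of K;
  alpha K s: mass-lumping weights; omK K, omKs K s: the sets omega_K, omega_{K,s}.\<close>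
definition discretization ::
  "('a::euclidean_space) set \<Rightarrow> nat set \<Rightarrow> (nat \<Rightarrow> 'a set) \<Rightarrow> (nat \<Rightarrow> 'a) \<Rightarrow>
   nat set \<Rightarrow> (nat \<Rightarrow> 'a) \<Rightarrow> (nat \<Rightarrow> nat set) \<Rightarrow> (nat \<Rightarrow> nat \<Rightarrow> real) \<Rightarrow>
   (nat \<Rightarrow> 'a set) \<Rightarrow> (nat \<Rightarrow> nat \<Rightarrow> 'a set) \<Rightarrow> bool" where
  "discretization \<Omega> Mc cell xK Vs xs VK alpha omK omKs \<longleftrightarrow>
     finite Mc \<and> finite Vs \<and>
     (\<forall>K\<in>Mc. open_polyhedral (cell K) \<and> cell K \<noteq> {} \<and> cell K \<subseteq> \<Omega>) \<and>
     (\<forall>K\<in>Mc. \<forall>L\<in>Mc. K \<noteq> L \<longrightarrow> cell K \<inter> cell L = {}) \<and>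
     (\<Union>K\<in>Mc. closure (cell K)) = closure \<Omega> \<and>
     (\<forall>K\<in>Mc. xK K \<in> cell K \<and> (\<forall>y\<in>cell K. closed_segment (xK K) y \<subseteq> cell K)) \<and>
     inj_on xs Vs \<and> (\<forall>s\<in>Vs. xs s \<in> closure \<Omega>) \<and>
     (\<forall>K\<in>Mc. VK K \<subseteq> Vs \<and> (\<forall>s\<in>VK K. xs s \<in> frontier (cell K))) \<and>
     (\<forall>K\<in>Mc. (\<forall>s\<in>VK K. alpha K s \<ge> 0) \<and> (\<Sum>s\<in>VK K. alpha K s) \<le> 1) \<and>
     (\<forall>K\<in>Mc.
        open (omK K) \<and> omK K \<subseteq> cell K \<and>
        (\<forall>s\<in>VK K. open (omKs K s) \<and> omKs K s \<subseteq> cell K \<and> omK K \<inter> omKs K s = {}) \<and>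
        (\<forall>s\<in>VK K. \<forall>t\<in>VK K. s \<noteq> t \<longrightarrow> omKs K s \<inter> omKs K t = {}) \<and>
        closure (omK K) \<union> (\<Union>s\<in>VK K. closure (omKs K s)) = closure (cell K) \<and>
        measure lebesgue (omK K) =
          measure lebesgue (cell K) - (\<Sum>s\<in>VK K. alpha K s * measure lebesgue (cell K)) \<and>
        (\<forall>s\<in>VK K. measure lebesgue (omKs K s) = alpha K s * measure lebesgue (cell K)))"

definition omega_s :: "nat set \<Rightarrow> (nat \<Rightarrow> nat set) \<Rightarrow> (nat \<Rightarrow> nat \<Rightarrow> 'a set) \<Rightarrow> nat \<Rightarrow> 'a set" where
  "omega_s Mc VK omKs s = (\<Union>K\<in>{K\<in>Mc. s \<in> VK K}. omKs K s)"

text \<open>Reconstruction operator pi_D: v = (vc K)_K, (vs s)_s.\<close>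
definition pi_D :: "nat set \<Rightarrow> nat set \<Rightarrow> (nat \<Rightarrow> nat set) \<Rightarrow> (nat \<Rightarrow> 'a set) \<Rightarrow>
    (nat \<Rightarrow> nat \<Rightarrow> 'a set) \<Rightarrow> (nat \<Rightarrow> real) \<Rightarrow> (nat \<Rightarrow> real) \<Rightarrow> 'a \<Rightarrow> real" where
  "pi_D Mc Vs VK omK omKs vc vs x =
     (\<Sum>K\<in>Mc. vc K * indicator (omK K) x) +
     (\<Sum>s\<in>Vs. vs s * indicator (omega_s Mc VK omKs s) x)"

definition energy_D :: "(real \<Rightarrow> real) \<Rightarrow> ereal \<Rightarrow> ('a::euclidean_space \<Rightarrow> real) \<Rightarrow> 'a set \<Rightarrow>
    nat set \<Rightarrow> (nat \<Rightarrow> 'a) \<Rightarrow> nat set \<Rightarrow> (nat \<Rightarrow> 'a) \<Rightarrow> (nat \<Rightarrow> nat set) \<Rightarrow>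
    (nat \<Rightarrow> 'a set) \<Rightarrow> (nat \<Rightarrow> nat \<Rightarrow> 'a set) \<Rightarrow> (nat \<Rightarrow> real) \<Rightarrow> (nat \<Rightarrow> real) \<Rightarrow> ereal" where
  "energy_D p p0 V \<Omega> Mc xK Vs xs VK omK omKs vc vs =
     (let u = pi_D Mc Vs VK omK omKs vc vs;
          W = pi_D Mc Vs VK omK omKs (\<lambda>K. V (xK K)) (\<lambda>s. V (xs s));
          f = (\<lambda>x. real_of_ereal (Gamma_fun p p0 (u x)) + u x * W x)
      in if (AE x in lebesgue. x \<in> \<Omega> \<longrightarrow> Gamma_fun p p0 (u x) \<noteq> \<infinity>) \<and>
            set_integrable lebesgue \<Omega> f
         then ereal (LINT x:\<Omega>|lebesgue. f x) else \<infinity>)"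

end

theory Submission
  imports Defs
begin


lemma LBINT_split:
  "(LBINT a=1..ereal u. f a) = (if 1 \<le> u then LINT a:{1<..<u}|lborel. f a
      else - (LINT a:{u<..<1}|lborel. f a))"
  by (simp add: interval_lebesgue_integral_def one_ereal_def)

lemma lower_sub:
  fixes g :: "real \<Rightarrow> real"
  assumes "x \<le> c" "c \<le> d" "d \<le> y" "set_integrable lborel {x<..<y} g"
    "\<And>a. a \<in> {x<..<y} \<Longrightarrow> 0 \<le> g a" "\<And>a. a \<in> {c<..<d} \<Longrightarrow> M \<le> g a" "0 \<le> M"
  shows "M * (d - c) \<le> (LINT a:{x<..<y}|lborel. g a)"
proof -
  have i1: "set_integrable lborel {x<..<y} (\<lambda>a. M * indicator {c<..<d} a)"
    unfolding set_integrable_def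
    by (rule integrable_mult_indicator) (auto intro!: integrable_mult_right integrable_real_indicator simp: emeasure_lborel_Ioo assms(2))
  have "(LINT a:{x<..<y}|lborel. M * indicator {c<..<d} a) = (LINT a|lborel. M * indicator {c<..<d} a)"
    unfolding set_lebesgue_integral_def using assms(1-3)
    by (intro Bochner_Integration.integral_cong) (auto split: split_indicator)
  also have "\<dots> = M * (d - c)" using assms(2) by simp
  finally have e: "(LINT a:{x<..<y}|lborel. M * indicator {c<..<d} a) = M * (d - c)" .
  have "(LINT a:{x<..<y}|lborel. M * indicator {c<..<d} a) \<le> (LINT a:{x<..<y}|lborel. g a)"
    using assms by (intro set_integral_mono[OF i1 assms(4)]) (auto split: split_indicator)
  then show ?thesis using e by (simp del: set_integral_mult_right)
qed

lemma const_int: "set_integrable lborel {x<..<(y::real)} (\<lambda>a. c::real)"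
  unfolding set_integrable_def
  by (cases "c = 0") (auto intro!: integrable_scaleR_left integrable_real_indicator emeasure_bounded_finite)

lemma Gamma_growth:
  fixes p :: "real \<Rightarrow> real" and p0 :: ereal
  assumes p_loc: "\<forall>b>0. set_integrable lborel {0..b} p"
    and p_mono: "mono_on {0<..} p"
    and p_infty: "filterlim p at_top at_top"
    and p0: "((\<lambda>u. ereal (p u)) \<longlongrightarrow> p0) (at_right 0)"
    and p_odd: "p0 \<noteq> -\<infinity> \<Longrightarrow> \<forall>u\<le>0. p u = 2 * real_of_ereal p0 - p (- u)"
    and M: "0 \<le> M"
  shows "\<exists>C\<ge>0. \<forall>u. Gamma_fun p p0 u \<noteq> \<infinity> \<longrightarrow>
     0 \<le> real_of_ereal (Gamma_fun p p0 u) \<and> M * \<bar>u\<bar> - C \<le> real_of_ereal (Gamma_fun p p0 u)"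
proof -
  have mono: "p a \<le> p b" if "0 < a" "a \<le> b" for a b
    using p_mono that by (auto intro: mono_onD)
  have p0le: "p0 \<le> ereal (p t)" if "0 < t" for t
  proof (rule tendsto_upperbound[OF p0])
    show "\<forall>\<^sub>F i in at_right 0. ereal (p i) \<le> ereal (p t)"
      using eventually_at_right_real[OF that] by eventually_elim (auto intro: mono)
  qed simp
  have I0: "set_integrable lborel {x<..<y} p" if "0 \<le> x" for x y
  proof -
    have "set_integrable lborel {0..\<bar>y\<bar>+1} p" using p_loc by simp
    then show ?thesis by (rule set_integrable_subset) (use that in auto)
  qed
  have "\<forall>\<^sub>F a in at_top. p 1 + M \<le> p a" using p_infty by (simp add: filterlim_at_top)
  then obtain N where N: "\<And>a. a \<ge> N \<Longrightarrow> p 1 + M \<le> p a" by (auto simp: eventually_at_top_linorder)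
  define a0 where "a0 = max 1 N"
  have a0: "1 \<le> a0" "\<And>a. a \<ge> a0 \<Longrightarrow> p 1 + M \<le> p a" using N by (auto simp: a0_def)
  define C where "C = M * a0 + M"
  have C0: "0 \<le> C" using M a0 by (simp add: C_def)
  show ?thesis
  proof (intro exI[of _ C] conjI allI impI C0)
    fix u assume fin: "Gamma_fun p p0 u \<noteq> \<infinity>"
    then have nf: "\<not> (p0 = -\<infinity> \<and> u < 0)" by (auto simp: Gamma_fun_def)
    have gam: "real_of_ereal (Gamma_fun p p0 u) = (LBINT a=1..ereal u. p a - p 1)"
      using nf by (auto simp: Gamma_fun_def)
    have "0 \<le> (LBINT a=1..ereal u. p a - p 1) \<and> M * \<bar>u\<bar> - C \<le> (LBINT a=1..ereal u. p a - p 1)"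
    proof (cases "1 \<le> u")
      case True
      have int: "set_integrable lborel {1<..<u} (\<lambda>a. p a - p 1)"
        using I0[of 1 u] const_int by (intro set_integral_diff) auto
      have "M * (u - min a0 u) \<le> (LINT a:{1<..<u}|lborel. p a - p 1)"
        apply (rule lower_sub[OF _ _ _ int])
        using True a0 M by (auto intro: mono simp: algebra_simps)
      moreover have "0 \<le> M * (u - min a0 u)" using M by simp
      moreover have "M * \<bar>u\<bar> - C \<le> M * (u - min a0 u)"
      proof (cases "a0 \<le> u")
        case True then show ?thesis using M a0 \<open>1 \<le> u\<close> by (simp add: C_def min_def algebra_simps)
      next
        case False
        then have "M * u \<le> M * a0" using M by (intro mult_left_mono) auto
        then show ?thesis using False M \<open>1 \<le> u\<close> by (simp add: C_def min_def algebra_simps)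
      qed
      ultimately show ?thesis using True by (simp add: LBINT_split)
    next
      case False
      have intp: "set_integrable lborel {u<..<1} p"
      proof (cases "0 \<le> u")
        case True then show ?thesis using I0 by simp
      next
        case neg: False
        then have "p0 \<noteq> -\<infinity>" using nf by auto
        moreover have "p0 \<noteq> \<infinity>" using p0le[of 1] by auto
        ultimately obtain q where q: "p0 = ereal q" by (cases p0) auto
        have odd: "\<And>a. a \<le> 0 \<Longrightarrow> p a = 2 * q - p (- a)" using p_odd q by auto
        have "integrable lborel (\<lambda>a. indicator {0<..<-u} a *\<^sub>R p a)"
          using I0[of 0 "-u"] by (simp add: set_integrable_def)
        then have "integrable lborel (\<lambda>x. indicator {0<..<-u} (0 + -1 * x) *\<^sub>R p (0 + -1 * x))"
          by (subst lborel_integrable_real_affine_iff) auto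
        also have "(\<lambda>x. indicator {0<..<-u} (0 + -1 * x) *\<^sub>R p (0 + -1 * x)) =
                   (\<lambda>x. indicator {u<..<0} x *\<^sub>R p (- x))"
          by (auto split: split_indicator)
        finally have r: "set_integrable lborel {u<..<0} (\<lambda>x. p (-x))" by (simp add: set_integrable_def)
        have "set_integrable lborel {u<..<0} (\<lambda>x. 2 * q - p (-x))"
          using r const_int by (intro set_integral_diff) auto
        also have "(\<lambda>x. indicator {u<..<0} x *\<^sub>R (2 * q - p (-x))) = (\<lambda>x. indicator {u<..<0} x *\<^sub>R p x)"
          using odd by (auto split: split_indicator)
        hence "set_integrable lborel {u<..<0} (\<lambda>x. 2 * q - p (-x)) = set_integrable lborel {u<..<0} p"
          by (simp add: set_integrable_def)
        finally have a: "set_integrable lborel {u<..<0} p" .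
        have b: "set_integrable lborel {0..1} p" using p_loc by simp
        have "set_integrable lborel ({u<..<0} \<union> {0..1}) p" by (rule set_integrable_Un[OF a b]) auto
        then show ?thesis by (rule set_integrable_subset) auto
      qed
      have int: "set_integrable lborel {u<..<1} (\<lambda>a. p a - p 1)"
        using intp const_int by (intro set_integral_diff) auto
      have int2: "set_integrable lborel {u<..<1} (\<lambda>a. p 1 - p a)"
        using intp const_int by (intro set_integral_diff) auto
      have eq: "(LBINT a=1..ereal u. p a - p 1) = (LINT a:{u<..<1}|lborel. p 1 - p a)"
        using False set_integral_uminus[OF int] by (simp add: LBINT_split)
      have nonneg: "0 \<le> p 1 - p a" if "a \<in> {u<..<1}" for a
      proof (cases "0 < a")
        case True then show ?thesis using that by (auto intro: mono)
      next
        case F2: False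
        then have "u < 0" using that by auto
        then have "p0 \<noteq> -\<infinity>" using nf by auto
        moreover have "p0 \<noteq> \<infinity>" using p0le[of 1] by auto
        ultimately obtain q where q: "p0 = ereal q" by (cases p0) auto
        have q1: "q \<le> p 1" using p0le[of 1] q by simp
        have odd: "p a = 2 * q - p (- a)" using p_odd q F2 by auto
        show ?thesis
        proof (cases "a = 0")
          case True then show ?thesis using odd q1 by simp
        next
          case False
          then have "q \<le> p (-a)" using p0le[of "-a"] q F2 by simp
          then show ?thesis using odd q1 by simp
        qed
      qed
      have bigM: "M \<le> p 1 - p a" if "a \<in> {u<..<max u (-a0)}" for a
      proof -
        have a1: "a < -a0" using that by auto
        then have "u < 0" using that a0 by auto
        then have "p0 \<noteq> -\<infinity>" using nf by auto
        moreover have "p0 \<noteq> \<infinity>" using p0le[of 1] by auto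
        ultimately obtain q where q: "p0 = ereal q" by (cases p0) auto
        have q1: "q \<le> p 1" using p0le[of 1] q by simp
        have odd: "p a = 2 * q - p (- a)" using p_odd q a1 a0 by auto
        have "p 1 + M \<le> p (-a)" using a0(2)[of "-a"] a1 by simp
        then show ?thesis using odd q1 by simp
      qed
      have lb: "M * (max u (-a0) - u) \<le> (LINT a:{u<..<1}|lborel. p 1 - p a)"
        apply (rule lower_sub[OF _ _ _ int2 nonneg bigM M])
        using False a0 by auto
      moreover have "0 \<le> M * (max u (-a0) - u)" using M by simp
      moreover have "M * \<bar>u\<bar> - C \<le> M * (max u (-a0) - u)"
      proof (cases "0 \<le> u")
        case True
        then have "M * \<bar>u\<bar> \<le> M * 1" using False M by (intro mult_left_mono) auto
        moreover have "0 \<le> M * (max u (-a0) - u)" "0 \<le> M * a0" using M a0 by auto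
        ultimately show ?thesis by (simp add: C_def)
      next
        case F3: False
        have "M * (-a0 - u) \<le> M * (max u (-a0) - u)" using M by (intro mult_left_mono) auto
        then show ?thesis using F3 M a0 by (simp add: C_def algebra_simps)
      qed
      ultimately show ?thesis using eq by simp
    qed
    then show "0 \<le> real_of_ereal (Gamma_fun p p0 u)" "M * \<bar>u\<bar> - C \<le> real_of_ereal (Gamma_fun p p0 u)"
      using gam by auto
  qed
qed

lemma pi_D_meas:
  assumes D: "discretization \<Omega> Mc cell xK Vs xs VK alpha omK omKs"
  shows "pi_D Mc Vs VK omK omKs a b \<in> borel_measurable lebesgue"
proof -
  have o1: "\<And>K. K \<in> Mc \<Longrightarrow> open (omK K)"
    and o2: "\<And>K s. K \<in> Mc \<Longrightarrow> s \<in> VK K \<Longrightarrow> open (omKs K s)"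
    using D by (simp_all add: discretization_def)
  have o3: "open (omega_s Mc VK omKs s)" for s
    unfolding omega_s_def using o2 by (intro open_UN) auto
  show ?thesis unfolding pi_D_def[abs_def]
    using o1 o3
    by (intro borel_measurable_add borel_measurable_sum borel_measurable_times borel_measurable_const
        borel_measurable_indicator) (auto intro: borel_open)
qed


lemma pi_D_bound:
  assumes D: "discretization \<Omega> Mc cell xK Vs xs VK alpha omK omKs"
    and a: "\<forall>K\<in>Mc. \<bar>a K\<bar> \<le> B" and b: "\<forall>s\<in>Vs. \<bar>b s\<bar> \<le> B" and B: "0 \<le> B"
  shows "\<bar>pi_D Mc Vs VK omK omKs a b x\<bar> \<le> B"
proof -
  have fin: "finite Mc" "finite Vs" using D by (simp_all add: discretization_def)
  have D1: "\<And>K L. K \<in> Mc \<Longrightarrow> L \<in> Mc \<Longrightarrow> K \<noteq> L \<Longrightarrow> cell K \<inter> cell L = {}"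
    using D by (simp add: discretization_def)
  have D2: "\<And>K. K \<in> Mc \<Longrightarrow> omK K \<subseteq> cell K"
    and D3: "\<And>K s. K \<in> Mc \<Longrightarrow> s \<in> VK K \<Longrightarrow> omKs K s \<subseteq> cell K"
    and D4: "\<And>K s. K \<in> Mc \<Longrightarrow> s \<in> VK K \<Longrightarrow> omK K \<inter> omKs K s = {}"
    and D5: "\<And>K s t. K \<in> Mc \<Longrightarrow> s \<in> VK K \<Longrightarrow> t \<in> VK K \<Longrightarrow> s \<noteq> t \<Longrightarrow> omKs K s \<inter> omKs K t = {}"
    using D by (simp_all add: discretization_def)
  have om: "x \<in> omega_s Mc VK omKs s \<longleftrightarrow> (\<exists>K\<in>Mc. s \<in> VK K \<and> x \<in> omKs K s)" for s
    by (auto simp: omega_s_def)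
  have uK: "x \<notin> omK L" if "L \<noteq> K"  "K \<in> Mc" "L \<in> Mc" "x \<in> omK K" for K L
    using D1[of K L] D2[of K] D2[of L] that by blast
  have KS: "x \<notin> omega_s Mc VK omKs s" if h: "K \<in> Mc" "x \<in> omK K" for K s
  proof
    assume "x \<in> omega_s Mc VK omKs s"
    then obtain L where L: "L \<in> Mc" "s \<in> VK L" "x \<in> omKs L s" using om by blast
    show False
    proof (cases "L = K")
      case True then show ?thesis using D4[of K s] L h by auto
    next
      case False then show ?thesis using D1[of K L] D2[of K] D3[of L s] L h by blast
    qed
  qed
  have uS: "x \<notin> omega_s Mc VK omKs t" if "t \<noteq> s" and h: "x \<in> omega_s Mc VK omKs s" for s t
  proof
    assume h2: "x \<in> omega_s Mc VK omKs t"
    have st: "t \<noteq> s" by fact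
    obtain K where K: "K \<in> Mc" "s \<in> VK K" "x \<in> omKs K s" using om h(1) by blast
    obtain L where L: "L \<in> Mc" "t \<in> VK L" "x \<in> omKs L t" using om h2 by blast
    show False
    proof (cases "L = K")
      case True then show ?thesis using D5[of K s t] K L st by auto
    next
      case False then show ?thesis using D1[of K L] D3[of K s] D3[of L t] K L by blast
    qed
  qed
  show ?thesis
  proof (cases "\<exists>K0\<in>Mc. x \<in> omK K0")
    case True
    then obtain K0 where K0: "K0 \<in> Mc" "x \<in> omK K0" by blast
    have "(\<Sum>K\<in>Mc. a K * indicator (omK K) x) = (\<Sum>K\<in>Mc. if K = K0 then a K0 else 0)"
      using uK[OF _ K0(1) _ K0(2)] K0 by (intro sum.cong refl) (auto simp: indicator_def simp del: )
    also have "\<dots> = a K0" using fin K0 by simp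
    finally have s1: "(\<Sum>K\<in>Mc. a K * indicator (omK K) x) = a K0" .
    have s2: "(\<Sum>s\<in>Vs. b s * indicator (omega_s Mc VK omKs s) x) = 0"
      using KS[OF K0] by (intro sum.neutral) auto
    show ?thesis unfolding pi_D_def s1 s2 using a K0 by simp
  next
    case False
    have s1: "(\<Sum>K\<in>Mc. a K * indicator (omK K) x) = 0"
      using False by (intro sum.neutral) auto
    show ?thesis
    proof (cases "\<exists>s0\<in>Vs. x \<in> omega_s Mc VK omKs s0")
      case True
      then obtain s0 where s0: "s0 \<in> Vs" "x \<in> omega_s Mc VK omKs s0" by blast
      have "(\<Sum>s\<in>Vs. b s * indicator (omega_s Mc VK omKs s) x) = (\<Sum>s\<in>Vs. if s = s0 then b s0 else 0)"
        using uS[OF _ s0(2)] s0 by (intro sum.cong refl) (auto simp: indicator_def)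
      also have "\<dots> = b s0" using fin s0 by simp
      finally show ?thesis unfolding pi_D_def s1 using b s0 by simp
    next
      case F2: False
      have s2: "(\<Sum>s\<in>Vs. b s * indicator (omega_s Mc VK omKs s) x) = 0"
        using F2 by (intro sum.neutral) auto
      show ?thesis unfolding pi_D_def s1 s2 using B by simp
    qed
  qed
qed



theorem lemma3p4:
  fixes p :: "real \<Rightarrow> real" and p0 :: ereal
    and V :: "real ^ 'd \<Rightarrow> real" and \<Omega> :: "(real ^ 'd) set"
  assumes dim: "CARD('d) = 2 \<or> CARD('d) = 3"
    and Omega: "open_polyhedral \<Omega>" "connected \<Omega>"
    and p_loc: "\<forall>b>0. set_integrable lborel {0..b} p"
    and p_ac: "\<forall>a b. 0 < a \<and> a < b \<longrightarrow> abs_continuous_on {a..b} p"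
    and p_mono: "mono_on {0<..} p"
    and p_infty: "filterlim p at_top at_top"
    and p0: "((\<lambda>u. ereal (p u)) \<longlongrightarrow> p0) (at_right 0)"
    and p_odd: "p0 \<noteq> -\<infinity> \<Longrightarrow> \<forall>u\<le>0. p u = 2 * real_of_ereal p0 - p (- u)"
    and V_lip: "\<exists>L. L-lipschitz_on (closure \<Omega>) V"
  shows "\<exists>C1 C2. \<forall>Mc cell xK Vs xs VK alpha omK omKs vc vs.
           discretization \<Omega> Mc cell xK Vs xs VK alpha omK omKs \<and>
           energy_D p p0 V \<Omega> Mc xK Vs xs VK omK omKs vc vs < \<infinity> \<longrightarrow>
           (let E = real_of_ereal (energy_D p p0 V \<Omega> Mc xK Vs xs VK omK omKs vc vs);
                G = (\<lambda>x. real_of_ereal (Gamma_fun p p0 (pi_D Mc Vs VK omK omKs vc vs x)))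
            in set_integrable lebesgue \<Omega> G \<and>
               E / 2 + C1 \<le> (LINT x:\<Omega>|lebesgue. G x) \<and>
               (LINT x:\<Omega>|lebesgue. G x) \<le> 2 * E + C2)"
proof -
  obtain L where L: "L-lipschitz_on (closure \<Omega>) V" using V_lip by blast
  have bdd: "bounded \<Omega>" and opn: "open \<Omega>" using Omega(1) by (auto simp: open_polyhedral_def)
  have "continuous_on (closure \<Omega>) V" using L by (rule lipschitz_on_continuous_on)
  then obtain B where B: "0 \<le> B" "\<And>x. x \<in> closure \<Omega> \<Longrightarrow> norm (V x) \<le> B"
    using continuous_on_compact_bound[of "closure \<Omega>" V] bdd by auto
  have "0 \<le> 2 * B" using B by simp
  from Gamma_growth[OF p_loc p_mono p_infty p0 p_odd this] obtain C where
    C: "0 \<le> C" "\<And>u. Gamma_fun p p0 u \<noteq> \<infinity> \<Longrightarrow>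
     0 \<le> real_of_ereal (Gamma_fun p p0 u) \<and> 2 * B * \<bar>u\<bar> - C \<le> real_of_ereal (Gamma_fun p p0 u)"
    by blast
  have lm: "\<Omega> \<in> lmeasurable" using bdd opn by (rule lmeasurable_open)
  have Om: "\<Omega> \<in> sets lebesgue" using lm by auto
  have Omf: "emeasure lebesgue \<Omega> \<noteq> \<infinity>" using fmeasurableD2[OF lm] by simp
  define m where "m = measure lebesgue \<Omega>"
  have m0: "0 \<le> m" by (simp add: m_def)
  have cint: "set_integrable lebesgue \<Omega> (\<lambda>x. c)" for c :: real
    unfolding set_integrable_def using Om Omf
    by (cases "c = 0") (auto intro!: integrable_scaleR_left integrable_real_indicator simp: less_top)
  have main: "let E = real_of_ereal (energy_D p p0 V \<Omega> Mc xK Vs xs VK omK omKs vc vs);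
                G = (\<lambda>x. real_of_ereal (Gamma_fun p p0 (pi_D Mc Vs VK omK omKs vc vs x)))
            in set_integrable lebesgue \<Omega> G \<and>
               E / 2 + - C * m \<le> (LINT x:\<Omega>|lebesgue. G x) \<and>
               (LINT x:\<Omega>|lebesgue. G x) \<le> 2 * E + 2 * C * m"
    if D: "discretization \<Omega> Mc cell xK Vs xs VK alpha omK omKs"
      and Efin: "energy_D p p0 V \<Omega> Mc xK Vs xs VK omK omKs vc vs < \<infinity>"
    for Mc cell xK Vs xs VK alpha omK omKs vc vs
  proof -
    define u where "u = pi_D Mc Vs VK omK omKs vc vs"
    define W where "W = pi_D Mc Vs VK omK omKs (\<lambda>K. V (xK K)) (\<lambda>s. V (xs s))"
    define g where "g = (\<lambda>x. real_of_ereal (Gamma_fun p p0 (u x)))"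
    define f where "f = (\<lambda>x. g x + u x * W x)"
    have cond: "(AE x in lebesgue. x \<in> \<Omega> \<longrightarrow> Gamma_fun p p0 (u x) \<noteq> \<infinity>) \<and> set_integrable lebesgue \<Omega> f"
      and Eeq: "energy_D p p0 V \<Omega> Mc xK Vs xs VK omK omKs vc vs = ereal (LINT x:\<Omega>|lebesgue. f x)"
      using Efin unfolding energy_D_def Let_def u_def[symmetric] W_def[symmetric]
      by (auto simp: f_def g_def split: if_splits)
    have Wb: "\<bar>W x\<bar> \<le> B" for x
      unfolding W_def
    proof (rule pi_D_bound[OF D _ _ B(1)])
      have "\<forall>K\<in>Mc. xK K \<in> cell K \<and> cell K \<subseteq> \<Omega>"
        using D by (simp add: discretization_def)
      then have "\<And>K. K \<in> Mc \<Longrightarrow> xK K \<in> closure \<Omega>"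
        using closure_subset by blast
      then show "\<forall>K\<in>Mc. \<bar>V (xK K)\<bar> \<le> B" using B by auto
      have "\<And>s. s \<in> Vs \<Longrightarrow> xs s \<in> closure \<Omega>"
        using D by (simp add: discretization_def)
      then show "\<forall>s\<in>Vs. \<bar>V (xs s)\<bar> \<le> B" using B by auto
    qed
    define Bu where "Bu = (\<Sum>K\<in>Mc. \<bar>vc K\<bar>) + (\<Sum>s\<in>Vs. \<bar>vs s\<bar>)"
    have fin: "finite Mc" "finite Vs" using D by (simp_all add: discretization_def)
    have ub: "\<bar>u x\<bar> \<le> Bu" for x
      unfolding u_def
    proof (rule pi_D_bound[OF D])
      have s1: "0 \<le> (\<Sum>K\<in>Mc. \<bar>vc K\<bar>)" "0 \<le> (\<Sum>s\<in>Vs. \<bar>vs s\<bar>)" by (auto intro: sum_nonneg)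
      show "\<forall>K\<in>Mc. \<bar>vc K\<bar> \<le> Bu"
      proof
        fix K assume "K \<in> Mc"
        then have "\<bar>vc K\<bar> \<le> (\<Sum>K\<in>Mc. \<bar>vc K\<bar>)" using fin by (intro member_le_sum) auto
        then show "\<bar>vc K\<bar> \<le> Bu" using s1 unfolding Bu_def by linarith
      qed
      show "\<forall>s\<in>Vs. \<bar>vs s\<bar> \<le> Bu"
      proof
        fix s assume "s \<in> Vs"
        then have "\<bar>vs s\<bar> \<le> (\<Sum>s\<in>Vs. \<bar>vs s\<bar>)" using fin by (intro member_le_sum) auto
        then show "\<bar>vs s\<bar> \<le> Bu" using s1 unfolding Bu_def by linarith
      qed
      show "0 \<le> Bu" by (simp add: Bu_def sum_nonneg)
    qed
    have um: "u \<in> borel_measurable lebesgue" "W \<in> borel_measurable lebesgue"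
      unfolding u_def W_def by (rule pi_D_meas[OF D])+
    have uWint: "set_integrable lebesgue \<Omega> (\<lambda>x. u x * W x)"
    proof (rule set_integrable_bound[OF cint[of "Bu * B"]])
      show "set_borel_measurable lebesgue \<Omega> (\<lambda>x. u x * W x)"
        unfolding set_borel_measurable_def using um Om by measurable
      show "AE x in lebesgue. x \<in> \<Omega> \<longrightarrow> norm (u x * W x) \<le> norm (Bu * B)"
      proof (rule AE_I2, intro impI)
        fix x
        have "\<bar>u x\<bar> * \<bar>W x\<bar> \<le> Bu * B"
          using ub[of x] Wb[of x] by (intro mult_mono) auto
        moreover have "0 \<le> Bu" using ub[of x] by linarith
        ultimately show "norm (u x * W x) \<le> norm (Bu * B)" using B by (simp add: abs_mult)
      qed
    qed
    have gint: "set_integrable lebesgue \<Omega> g"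
    proof -
      have "set_integrable lebesgue \<Omega> (\<lambda>x. f x - u x * W x)"
        using cond uWint by (intro set_integral_diff) auto
      moreover have "(\<lambda>x. f x - u x * W x) = g" by (auto simp: f_def)
      ultimately show ?thesis by simp
    qed
    have g0: "0 \<le> g x" for x
      using C(2)[of "u x"] by (cases "Gamma_fun p p0 (u x) = \<infinity>") (auto simp: g_def)
    have AEb: "AE x in lebesgue. x \<in> \<Omega> \<longrightarrow> \<bar>u x * W x\<bar> \<le> g x / 2 + C"
      using conjunct1[OF cond]
    proof eventually_elim
      case (elim x)
      show ?case
      proof
        assume "x \<in> \<Omega>"
        then have "Gamma_fun p p0 (u x) \<noteq> \<infinity>" using elim by blast
        then have gb: "2 * B * \<bar>u x\<bar> - C \<le> g x" using C(2) by (auto simp: g_def)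
        have "\<bar>u x\<bar> * \<bar>W x\<bar> \<le> \<bar>u x\<bar> * B" using Wb[of x] by (intro mult_left_mono) auto
        then show "\<bar>u x * W x\<bar> \<le> g x / 2 + C" using gb C(1) by (simp add: abs_mult algebra_simps)
      qed
    qed
    have hint: "set_integrable lebesgue \<Omega> (\<lambda>x. g x / 2 + C)"
      using gint cint by (intro set_integral_add) auto
    have hval: "(LINT x:\<Omega>|lebesgue. g x / 2 + C) = (LINT x:\<Omega>|lebesgue. g x) / 2 + C * m"
      using gint cint[of C] Om Omf by (simp add: set_integral_add set_integral_const m_def)
    have J1: "(LINT x:\<Omega>|lebesgue. u x * W x) \<le> (LINT x:\<Omega>|lebesgue. g x / 2 + C)"
      by (rule set_integral_mono_AE[OF uWint hint]) (use AEb in \<open>eventually_elim, auto\<close>)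
    have mi: "set_integrable lebesgue \<Omega> (\<lambda>x. - (u x * W x))"
      using uWint unfolding set_integrable_def by (simp add: integrable_minus)
    have J2: "(LINT x:\<Omega>|lebesgue. - (u x * W x)) \<le> (LINT x:\<Omega>|lebesgue. g x / 2 + C)"
      by (rule set_integral_mono_AE[OF mi hint]) (use AEb in \<open>eventually_elim, auto\<close>)
    have I0: "0 \<le> (LINT x:\<Omega>|lebesgue. g x)"
      unfolding set_lebesgue_integral_def using g0 by (intro integral_nonneg_AE) auto
    have Esum: "(LINT x:\<Omega>|lebesgue. f x) = (LINT x:\<Omega>|lebesgue. g x) + (LINT x:\<Omega>|lebesgue. u x * W x)"
      unfolding f_def using gint uWint by (rule set_integral_add(2))
    define I where "I = (LINT x:\<Omega>|lebesgue. g x)"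
    define J where "J = (LINT x:\<Omega>|lebesgue. u x * W x)"
    have J2': "- J \<le> I / 2 + C * m" using J2 hval set_integral_uminus[OF uWint] by (simp add: I_def J_def)
    have J1': "J \<le> I / 2 + C * m" using J1 hval by (simp add: I_def J_def)
    have Cm: "0 \<le> C * m" using C(1) m0 by simp
    have E: "real_of_ereal (energy_D p p0 V \<Omega> Mc xK Vs xs VK omK omKs vc vs) = I + J"
      using Eeq Esum by (simp add: I_def J_def)
    have "I / 2 + J / 2 - C * m \<le> I" using J1' J2' I0[folded I_def] Cm by linarith
    moreover have "I \<le> 2 * (I + J) + 2 * (C * m)" using J1' J2' I0[folded I_def] Cm by argo
    ultimately have fin1: "(I + J) / 2 + - C * m \<le> I" "I \<le> 2 * (I + J) + 2 * C * m"
      by (simp_all add: mult.assoc add_divide_distrib)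
    have GI: "(LINT x:\<Omega>|lebesgue. real_of_ereal (Gamma_fun p p0 (pi_D Mc Vs VK omK omKs vc vs x))) = I"
      by (simp add: I_def g_def u_def)
    have GI2: "set_integrable lebesgue \<Omega> (\<lambda>x. real_of_ereal (Gamma_fun p p0 (pi_D Mc Vs VK omK omKs vc vs x)))"
      using gint by (simp add: g_def u_def)
    show ?thesis
      unfolding Let_def E GI using GI2 fin1 by blast
  qed
  show ?thesis
    by (intro exI[of _ "- C * m"] exI[of _ "2 * C * m"] allI impI) (use main in blast)
qed

end
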